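(* Let $d>0$, $\alpha\in\mathbb R$, $p\in C^1([a,b])$, and let $(\lambda_1,\Phi_1)$ be the principal eigenpair of $$(d\Phi_x-\alpha\Phi)_x+(p(x)+\lambda)\Phi=0,\ a<x<b;\qquad d\Phi_x-\alpha\Phi=0\ \text{at }x=a,b,$$ with $\Phi_1>0$ on $[a,b]$. Then: (a) if $p_x\le0$ on $[a,b]$ and $p_x\not\equiv0$, then $d\,(\Phi_1)_x<\alpha\Phi_1$ in $(a,b)$; (b) if $p_x\ge0$ on $[a,b]$ and $p_x\not\equiv0$, then $d\,(\Phi_1)_x>\alpha\Phi_1$ in $(a,b)$.
   Context: The principal eigenvalue $\lambda_1$ is the smallest eigenvalue; it is simple and its eigenfunction can be chosen strictly positive. *)

theory Defs
  imports "HOL-Analysis.Analysis"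
begin

text \<open>The flux derivative (d Phi' - alpha Phi)' is written out as d Phi'' - alpha Phi'.\<close>
definition is_eigenfunction ::
  "real \<Rightarrow> real \<Rightarrow> (real \<Rightarrow> real) \<Rightarrow> real \<Rightarrow> real \<Rightarrow> real \<Rightarrow> (real \<Rightarrow> real) \<Rightarrow> bool" where
  "is_eigenfunction d \<alpha> p a b lam \<Phi> \<longleftrightarrow>
     (\<exists>\<Phi>' \<Phi>''.
        (\<forall>x\<in>{a..b}. (\<Phi> has_real_derivative \<Phi>' x) (at x within {a..b}) \<and>
                     (\<Phi>' has_real_derivative \<Phi>'' x) (at x within {a..b})) \<and>
        continuous_on {a..b} \<Phi>'' \<and>
        (\<forall>x\<in>{a<..<b}. d * \<Phi>'' x - \<alpha> * \<Phi>' x + (p x + lam) * \<Phi> x = 0) \<and>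
        d * \<Phi>' a - \<alpha> * \<Phi> a = 0 \<and>
        d * \<Phi>' b - \<alpha> * \<Phi> b = 0) \<and>
     (\<exists>x\<in>{a..b}. \<Phi> x \<noteq> 0)"

definition is_eigenvalue ::
  "real \<Rightarrow> real \<Rightarrow> (real \<Rightarrow> real) \<Rightarrow> real \<Rightarrow> real \<Rightarrow> real \<Rightarrow> bool" where
  "is_eigenvalue d \<alpha> p a b lam \<longleftrightarrow> (\<exists>\<Phi>. is_eigenfunction d \<alpha> p a b lam \<Phi>)"

definition is_principal_eigenvalue ::
  "real \<Rightarrow> real \<Rightarrow> (real \<Rightarrow> real) \<Rightarrow> real \<Rightarrow> real \<Rightarrow> real \<Rightarrow> bool" where
  "is_principal_eigenvalue d \<alpha> p a b lam1 \<longleftrightarrow>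
     is_eigenvalue d \<alpha> p a b lam1 \<and> (\<forall>lam. is_eigenvalue d \<alpha> p a b lam \<longrightarrow> lam1 \<le> lam)"

end

theory Submission
  imports Defs
begin

lemma deriv_zero_open:
  fixes f :: "real \<Rightarrow> real"
  assumes "(f has_real_derivative D) (at y)" "open S" "y \<in> S" "\<And>t. t \<in> S \<Longrightarrow> f t = 0"
  shows "D = 0"
proof -
  have "((\<lambda>_. 0) has_real_derivative D) (at y)"
    using has_field_derivative_transform_within_open[OF assms(1-3)] assms(4) by metis
  then show ?thesis using DERIV_const DERIV_unique by blast
qed

lemma mvt_at:
  fixes f f' :: "real \<Rightarrow> real"
  assumes "s < t" "continuous_on {s..t} f" "\<And>x. s < x \<Longrightarrow> x < t \<Longrightarrow> (f has_real_derivative f' x) (at x)"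
  shows "\<exists>\<xi>. s < \<xi> \<and> \<xi> < t \<and> f t - f s = (t - s) * f' \<xi>"
proof -
  obtain l \<xi> where "s < \<xi>" "\<xi> < t" "DERIV f \<xi> :> l" "f t - f s = (t - s) * l"
    using MVT[OF assms(1,2)] assms(3) real_differentiable_def by blast
  moreover have "l = f' \<xi>" using DERIV_unique assms(3) calculation by blast
  ultimately show ?thesis by blast
qed

lemma mvt_sub:
  fixes f f' :: "real \<Rightarrow> real"
  assumes "a \<le> s" "s < t" "t \<le> b" "continuous_on {a..b} f"
    "\<And>x. a < x \<Longrightarrow> x < b \<Longrightarrow> (f has_real_derivative f' x) (at x)"
  shows "\<exists>\<xi>. s < \<xi> \<and> \<xi> < t \<and> f t - f s = (t - s) * f' \<xi>"
proof (rule mvt_at[OF assms(2)])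
  show "continuous_on {s..t} f"
    by (rule continuous_on_subset[OF assms(4)]) (use assms(1,3) in auto)
  fix x assume "s < x" "x < t"
  thus "(f has_real_derivative f' x) (at x)" using assms(1,3) by (intro assms(5)) auto
qed

lemma core:
  fixes z g k g' :: "real \<Rightarrow> real"
  assumes ab: "a < b" and cz: "continuous_on {a..b} z" and cg: "continuous_on {a..b} g"
    and za: "z a = 0" and zb: "z b = 0"
    and dz: "\<And>t. a < t \<Longrightarrow> t < b \<Longrightarrow> (z has_real_derivative (k t * g t)) (at t)"
    and kpos: "\<And>t. a < t \<Longrightarrow> t < b \<Longrightarrow> k t > 0"
    and dg: "\<And>t. a < t \<Longrightarrow> t < b \<Longrightarrow> (g has_real_derivative g' t) (at t)"
    and g'nn: "\<And>t. a < t \<Longrightarrow> t < b \<Longrightarrow> g' t \<ge> 0"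
    and y: "a < y" "y < b" "g' y \<noteq> 0"
    and x: "a < x" "x < b"
  shows "z x < 0"
proof (rule ccontr)
  assume "\<not> z x < 0"
  hence zx: "z x \<ge> 0" by simp
  have gmono: "g s \<le> g t" if hs: "a < s" "s \<le> t" "t < b" for s t
  proof (cases "s = t")
    case False
    hence "s < t" using hs by simp
    then obtain \<xi> where \<xi>: "s < \<xi>" "\<xi> < t" "g t - g s = (t - s) * g' \<xi>"
      using mvt_sub[of a s t b g g', OF _ _ _ cg dg] hs by auto
    have "g' \<xi> \<ge> 0" using g'nn \<xi> hs by simp
    hence "(t - s) * g' \<xi> \<ge> 0" using \<open>s < t\<close> by simp
    then show ?thesis using \<xi>(3) by linarith
  qed simp
  have mvz: "\<exists>\<xi>. s < \<xi> \<and> \<xi> < t \<and> z t - z s = (t - s) * (k \<xi> * g \<xi>)"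
    if "a \<le> s" "s < t" "t \<le> b" for s t
    using mvt_sub[of a s t b z "\<lambda>t. k t * g t", OF that cz dz] by blast
  have pos_l: "(t - s) * (k \<xi> * g \<xi>) > 0" if "s < t" "a < \<xi>" "\<xi> < b" "g \<xi> > 0" for s t \<xi>
    using kpos[OF that(2,3)] that by simp
  have neg_l: "(t - s) * (k \<xi> * g \<xi>) < 0" if "s < t" "a < \<xi>" "\<xi> < b" "g \<xi> < 0" for s t \<xi>
    using kpos[OF that(2,3)] that by (simp add: mult_pos_neg)
  have nn_l: "(t - s) * (k \<xi> * g \<xi>) \<ge> 0" if "s < t" "a < \<xi>" "\<xi> < b" "g \<xi> \<ge> 0" for s t \<xi>
    using kpos[OF that(2,3)] that by simp
  have np_l: "(t - s) * (k \<xi> * g \<xi>) \<le> 0" if "s < t" "a < \<xi>" "\<xi> < b" "g \<xi> \<le> 0" for s t \<xi>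
  proof -
    have "k \<xi> * g \<xi> \<le> 0" using kpos[OF that(2,3)] that(4) by (simp add: mult_nonneg_nonpos)
    thus ?thesis using that(1) by (simp add: mult_nonneg_nonpos)
  qed
  consider "g x < 0" | "g x > 0" | "g x = 0" by linarith
  then show False
  proof cases
    case 1
    obtain \<xi> where \<xi>: "a < \<xi>" "\<xi> < x" "z x - z a = (x - a) * (k \<xi> * g \<xi>)"
      using mvz[of a x] x ab by auto
    have "g \<xi> < 0" using gmono[of \<xi> x] \<xi> 1 x by simp
    hence "(x - a) * (k \<xi> * g \<xi>) < 0" using neg_l \<xi> x by simp
    then show False using \<xi>(3) za zx by linarith
  next
    case 2
    obtain \<xi> where \<xi>: "x < \<xi>" "\<xi> < b" "z b - z x = (b - x) * (k \<xi> * g \<xi>)"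
      using mvz[of x b] x ab by auto
    have "g \<xi> > 0" using gmono[of x \<xi>] \<xi> 2 x by simp
    hence "(b - x) * (k \<xi> * g \<xi>) > 0" using pos_l \<xi> x by simp
    then show False using \<xi>(3) zb zx by linarith
  next
    case 3
    have le: "z t \<le> 0" if ht: "a < t" "t \<le> x" for t
    proof -
      obtain \<xi> where \<xi>: "a < \<xi>" "\<xi> < t" "z t - z a = (t - a) * (k \<xi> * g \<xi>)"
        using mvz[of a t] ht x by auto
      have "g \<xi> \<le> 0" using gmono[of \<xi> x] \<xi> 3 ht x by simp
      hence "(t - a) * (k \<xi> * g \<xi>) \<le> 0" using np_l \<xi> ht x by simp
      then show ?thesis using \<xi>(3) za by linarith
    qed
    have ge: "z t \<le> 0" if ht: "x \<le> t" "t < b" for t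
    proof -
      obtain \<xi> where \<xi>: "t < \<xi>" "\<xi> < b" "z b - z t = (b - t) * (k \<xi> * g \<xi>)"
        using mvz[of t b] ht x by auto
      have "g \<xi> \<ge> 0" using gmono[of x \<xi>] \<xi> 3 ht x by simp
      hence "(b - t) * (k \<xi> * g \<xi>) \<ge> 0" using nn_l \<xi> ht x by simp
      then show ?thesis using \<xi>(3) zb by linarith
    qed
    have zx0: "z x = 0" using le[of x] zx x by simp
    have z0: "z t = 0" if ht: "a < t" "t < b" for t
    proof (cases "t \<le> x")
      case True
      show ?thesis
      proof (cases "t = x")
        case False
        then obtain \<xi> where \<xi>: "t < \<xi>" "\<xi> < x" "z x - z t = (x - t) * (k \<xi> * g \<xi>)"
          using mvz[of t x] ht True x by auto
        have "g \<xi> \<le> 0" using gmono[of \<xi> x] \<xi> 3 ht x by simp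
        hence "(x - t) * (k \<xi> * g \<xi>) \<le> 0" using np_l \<xi> ht x by simp
        hence "z t \<ge> 0" using \<xi>(3) zx0 by linarith
        then show ?thesis using le[of t] ht True by simp
      qed (use zx0 in simp)
    next
      case False
      obtain \<xi> where \<xi>: "x < \<xi>" "\<xi> < t" "z t - z x = (t - x) * (k \<xi> * g \<xi>)"
        using mvz[of x t] ht False x by auto
      have "g \<xi> \<ge> 0" using gmono[of x \<xi>] \<xi> 3 ht x by simp
      hence "(t - x) * (k \<xi> * g \<xi>) \<ge> 0" using nn_l \<xi> ht x by simp
      hence "z t \<ge> 0" using \<xi>(3) zx0 by linarith
      then show ?thesis using ge[of t] ht False by simp
    qed
    have g0: "g t = 0" if "a < t" "t < b" for t
    proof -
      have "k t * g t = 0"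
        by (rule deriv_zero_open[OF dz[OF that], of "{a<..<b}"]) (use that z0 in auto)
      then show ?thesis using kpos[OF that] by simp
    qed
    have "g' y = 0"
      by (rule deriv_zero_open[OF dg[OF y(1,2)], of "{a<..<b}"]) (use y g0 in auto)
    then show False using y by simp
  qed
qed


lemma nonzero_interior:
  fixes f :: "real \<Rightarrow> real"
  assumes "a < b" "continuous_on {a..b} f" "x0 \<in> {a..b}" "f x0 \<noteq> 0"
  shows "\<exists>y\<in>{a<..<b}. f y \<noteq> 0"
proof (rule ccontr)
  assume "\<not> ?thesis"
  hence "f x0 = 0"
    using continuous_constant_on_closure[of "{a<..<b}" f 0 x0] assms by auto
  then show False using assms by simp
qed

lemma derivg:
  fixes F GG P p p' :: "real \<Rightarrow> real" and d \<alpha> lam1 t :: real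
  assumes dFt: "(F has_real_derivative GG t) (at t)" and dPhi: "(P has_real_derivative F t) (at t)"
   and dp: "(p has_real_derivative p' t) (at t)" and dnz: "d \<noteq> 0"
  shows "((\<lambda>x. exp (- \<alpha> * x / d) * (- d * (p x + lam1) * (P x)^2 - (d * F x - \<alpha> * P x)^2 - \<alpha> * (d * F x - \<alpha> * P x) * P x)) has_real_derivative
        exp (- \<alpha> * t / d) * (- \<alpha> / d) * (- d * (p t + lam1) * (P t)^2 - (d * F t - \<alpha> * P t)^2 - \<alpha> * (d * F t - \<alpha> * P t) * P t)
        + exp (- \<alpha> * t / d) * (- d * p' t * (P t)^2 - d * (p t + lam1) * (2 * P t * F t)
           - 2 * (d * F t - \<alpha> * P t) * (d * GG t - \<alpha> * F t)
           - \<alpha> * ((d * GG t - \<alpha> * F t) * P t + (d * F t - \<alpha> * P t) * F t))) (at t)"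
  apply (rule derivative_eq_intros dFt dPhi dp dnz refl)+
  using dnz apply (simp add: field_simps power2_eq_square)
  done
lemma alg1:
  fixes d \<alpha> E P F GG p p' lam :: real
  assumes d: "d > 0" and E: "E > 0" and P: "P > 0" and e: "d * GG - \<alpha> * F = -(p + lam) * P"
  shows "((d * GG - \<alpha> * F) * P - (d * F - \<alpha> * P) * F) / (P * P)
     = 1 / (d * E * P^2) * (E * (- d * (p + lam) * P^2 - (d * F - \<alpha> * P)^2 - \<alpha> * (d * F - \<alpha> * P) * P))"
  unfolding e using d E P by (simp add: field_simps power2_eq_square)
lemma alg2:
  fixes d \<alpha> E P F GG p p' lam :: real
  assumes d: "d > 0" and e: "d * GG - \<alpha> * F = -(p + lam) * P"
  shows "E * (- \<alpha> / d) * (- d * (p + lam) * P^2 - (d * F - \<alpha> * P)^2 - \<alpha> * (d * F - \<alpha> * P) * P)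
        + E * (- d * p' * P^2 - d * (p + lam) * (2 * P * F)
           - 2 * (d * F - \<alpha> * P) * (d * GG - \<alpha> * F)
           - \<alpha> * ((d * GG - \<alpha> * F) * P + (d * F - \<alpha> * P) * F)) = - d * p' * P^2 * E"
  unfolding e using d by (simp add: field_simps power2_eq_square)

lemma sgn1:
  fixes d q P E :: real
  assumes "d > 0" "E > 0" "q \<le> 0"
  shows "0 \<le> - d * q * P^2 * E"
proof -
  have "0 \<le> d * (- q) * P^2 * E" using assms by (intro mult_nonneg_nonneg) auto
  thus ?thesis by simp
qed

lemma sgn2:
  fixes d q P E :: real
  assumes "d > 0" "E > 0" "q \<ge> 0"
  shows "0 \<le> - (- d * q * P^2 * E)"
proof -
  have "0 \<le> d * q * P^2 * E" using assms by (intro mult_nonneg_nonneg) auto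
  thus ?thesis by simp
qed

theorem lemma5p1:
  fixes d \<alpha> a b lam1 :: real and p p' \<Phi>1 :: "real \<Rightarrow> real"
  assumes "a < b" and "d > 0"
    and p_deriv: "\<forall>x\<in>{a..b}. (p has_real_derivative p' x) (at x within {a..b})"
    and p'_cont: "continuous_on {a..b} p'"
    and princ: "is_principal_eigenvalue d \<alpha> p a b lam1"
    and eigf: "is_eigenfunction d \<alpha> p a b lam1 \<Phi>1"
    and pos: "\<forall>x\<in>{a..b}. \<Phi>1 x > 0"
  shows "((\<forall>x\<in>{a..b}. p' x \<le> 0) \<and> (\<exists>x\<in>{a..b}. p' x \<noteq> 0)
            \<longrightarrow> (\<forall>x\<in>{a<..<b}. d * deriv \<Phi>1 x < \<alpha> * \<Phi>1 x))
       \<and> ((\<forall>x\<in>{a..b}. p' x \<ge> 0) \<and> (\<exists>x\<in>{a..b}. p' x \<noteq> 0)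
            \<longrightarrow> (\<forall>x\<in>{a<..<b}. d * deriv \<Phi>1 x > \<alpha> * \<Phi>1 x))"
proof -
  note ab = \<open>a < b\<close>
  obtain F GG where dF: "\<forall>x\<in>{a..b}. (\<Phi>1 has_real_derivative F x) (at x within {a..b}) \<and>
                     (F has_real_derivative GG x) (at x within {a..b})"
    and eq: "\<forall>x\<in>{a<..<b}. d * GG x - \<alpha> * F x + (p x + lam1) * \<Phi>1 x = 0"
    and bca: "d * F a - \<alpha> * \<Phi>1 a = 0" and bcb: "d * F b - \<alpha> * \<Phi>1 b = 0"
    using eigf unfolding is_eigenfunction_def by blast
  have cPhi: "continuous_on {a..b} \<Phi>1" using dF by (intro DERIV_continuous_on) blast
  have cF: "continuous_on {a..b} F" using dF by (intro DERIV_continuous_on) blast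
  have cp: "continuous_on {a..b} p" using p_deriv by (intro DERIV_continuous_on) blast
  have dPhi: "(\<Phi>1 has_real_derivative F t) (at t)" if "a < t" "t < b" for t
  proof -
    have "(\<Phi>1 has_real_derivative F t) (at t within {a..b})" using dF that by auto
    thus ?thesis using at_within_Icc_at[OF that] by simp
  qed
  have dFt: "(F has_real_derivative GG t) (at t)" if "a < t" "t < b" for t
  proof -
    have "(F has_real_derivative GG t) (at t within {a..b})" using dF that by auto
    thus ?thesis using at_within_Icc_at[OF that] by simp
  qed
  have dp: "(p has_real_derivative p' t) (at t)" if "a < t" "t < b" for t
  proof -
    have "(p has_real_derivative p' t) (at t within {a..b})" using p_deriv that by auto
    thus ?thesis using at_within_Icc_at[OF that] by simp
  qed
  define w where "w x = d * F x - \<alpha> * \<Phi>1 x" for x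
  define E where "E x = exp (- \<alpha> * x / d)" for x
  define g where "g x = E x * (- d * (p x + lam1) * (\<Phi>1 x)^2 - (w x)^2 - \<alpha> * w x * \<Phi>1 x)" for x
  define z where "z x = w x / \<Phi>1 x" for x
  define k where "k x = 1 / (d * E x * (\<Phi>1 x)^2)" for x
  define gd where "gd x = - d * p' x * (\<Phi>1 x)^2 * E x" for x
  have Epos: "E x > 0" for x unfolding E_def by simp
  have cw: "continuous_on {a..b} w" unfolding w_def by (intro continuous_intros cF cPhi)
  have cE: "continuous_on {a..b} E" unfolding E_def using \<open>d > 0\<close> by (intro continuous_intros) auto
  have cg: "continuous_on {a..b} g" unfolding g_def by (intro continuous_intros cE cp cPhi cw)
  have cz: "continuous_on {a..b} z" unfolding z_def using pos
    by (intro continuous_intros cw cPhi) auto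
  have za: "z a = 0" using bca ab by (simp add: z_def w_def)
  have zb: "z b = 0" using bcb ab by (simp add: z_def w_def)
  have kpos: "k t > 0" if "a < t" "t < b" for t
    using pos that Epos[of t] \<open>d > 0\<close> unfolding k_def by (metis greaterThanLessThan_iff greaterThanLessThan_subseteq_atLeastAtMost_iff order_refl subsetD mult_pos_pos zero_less_power divide_pos_pos zero_less_one)
  have dz: "(z has_real_derivative (k t * g t)) (at t)" if "a < t" "t < b" for t
  proof -
    have Pp: "\<Phi>1 t > 0" using pos that by auto
    have e: "d * GG t - \<alpha> * F t = - (p t + lam1) * \<Phi>1 t" using eq that by (auto simp: algebra_simps)
    have dw: "(w has_real_derivative (d * GG t - \<alpha> * F t)) (at t)"
    proof -
      have "w = (\<lambda>x. d * F x - \<alpha> * \<Phi>1 x)" by (simp add: w_def fun_eq_iff)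
      thus ?thesis using DERIV_diff[OF DERIV_cmult[OF dFt[OF that], of d] DERIV_cmult[OF dPhi[OF that], of \<alpha>]] by simp
    qed
    have zz: "z = (\<lambda>x. w x / \<Phi>1 x)" by (simp add: z_def fun_eq_iff)
    have "(z has_real_derivative ((d * GG t - \<alpha> * F t) * \<Phi>1 t - w t * F t) / (\<Phi>1 t * \<Phi>1 t)) (at t)"
      unfolding zz by (rule DERIV_divide[OF dw dPhi[OF that]]) (use Pp in simp)
    moreover have "((d * GG t - \<alpha> * F t) * \<Phi>1 t - w t * F t) / (\<Phi>1 t * \<Phi>1 t) = k t * g t"
      unfolding k_def g_def w_def E_def by (rule alg1[OF \<open>d > 0\<close> _ Pp e]) simp
    ultimately show ?thesis by simp
  qed
  have dg: "(g has_real_derivative gd t) (at t)" if "a < t" "t < b" for t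
  proof -
    have e: "d * GG t - \<alpha> * F t = - (p t + lam1) * \<Phi>1 t" using eq that by (auto simp: algebra_simps)
    have gg: "g = (\<lambda>x. exp (- \<alpha> * x / d) * (- d * (p x + lam1) * (\<Phi>1 x)^2 - (d * F x - \<alpha> * \<Phi>1 x)^2 - \<alpha> * (d * F x - \<alpha> * \<Phi>1 x) * \<Phi>1 x))"
      by (simp add: g_def E_def w_def fun_eq_iff)
    have dnz: "d \<noteq> 0" using \<open>d > 0\<close> by simp
    show ?thesis unfolding gg gd_def E_def
      by (rule DERIV_cong[OF derivg[where F=F and GG=GG and P=\<Phi>1 and p=p and p'=p' and t=t, OF dFt[OF that] dPhi[OF that] dp[OF that] dnz]]) (rule alg2[OF \<open>d > 0\<close> e])
  qed
  have derivPhi: "deriv \<Phi>1 t = F t" if "a < t" "t < b" for t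
    using DERIV_imp_deriv dPhi[OF that] by blast
  have wz: "w t < 0 \<longleftrightarrow> z t < 0" "w t > 0 \<longleftrightarrow> z t > 0" if "a < t" "t < b" for t
  proof -
    have "\<Phi>1 t > 0" using pos that by auto
    thus "w t < 0 \<longleftrightarrow> z t < 0" "w t > 0 \<longleftrightarrow> z t > 0"
      by (auto simp: z_def divide_less_0_iff zero_less_divide_iff)
  qed
  show ?thesis
  proof (intro conjI impI ballI)
    fix x assume H: "(\<forall>x\<in>{a..b}. p' x \<le> 0) \<and> (\<exists>x\<in>{a..b}. p' x \<noteq> 0)" and x: "x \<in> {a<..<b}"
    obtain y where y: "y \<in> {a<..<b}" "p' y \<noteq> 0" using nonzero_interior[OF ab p'_cont] H by blast
    have "z x < 0"
    proof (rule core[OF ab cz cg za zb dz kpos dg, of y x])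
      fix t assume "a < t" "t < b"
      hence "p' t \<le> 0" using H by auto
      thus "0 \<le> gd t" unfolding gd_def by (rule sgn1[OF \<open>d > 0\<close> Epos[of t]])
    next
      have "\<Phi>1 y > 0" using y pos by auto
      thus "gd y \<noteq> 0" using y Epos[of y] \<open>d > 0\<close> unfolding gd_def by auto
    qed (use x y in auto)
    then show "d * deriv \<Phi>1 x < \<alpha> * \<Phi>1 x" using wz x derivPhi by (auto simp: w_def)
  next
    fix x assume H: "(\<forall>x\<in>{a..b}. p' x \<ge> 0) \<and> (\<exists>x\<in>{a..b}. p' x \<noteq> 0)" and x: "x \<in> {a<..<b}"
    obtain y where y: "y \<in> {a<..<b}" "p' y \<noteq> 0" using nonzero_interior[OF ab p'_cont] H by blast
    have "- z x < 0"
    proof (rule core[of a b "\<lambda>t. - z t" "\<lambda>t. - g t" k "\<lambda>t. - gd t" y x])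
      show "continuous_on {a..b} (\<lambda>t. - z t)" using cz by (intro continuous_intros)
      show "continuous_on {a..b} (\<lambda>t. - g t)" using cg by (intro continuous_intros)
      fix t assume t: "a < t" "t < b"
      show "((\<lambda>t. - z t) has_real_derivative k t * - g t) (at t)"
        using DERIV_minus[OF dz[OF t]] by simp
      show "((\<lambda>t. - g t) has_real_derivative - gd t) (at t)"
        using DERIV_minus[OF dg[OF t]] by simp
      have "p' t \<ge> 0" using H t by auto
      thus "0 \<le> - gd t" unfolding gd_def by (rule sgn2[OF \<open>d > 0\<close> Epos[of t]])
    next
      have "\<Phi>1 y > 0" using y pos by auto
      thus "- gd y \<noteq> 0" using y Epos[of y] \<open>d > 0\<close> unfolding gd_def by auto
    qed (use x y ab za zb kpos in auto)
    then show "d * deriv \<Phi>1 x > \<alpha> * \<Phi>1 x" using wz x derivPhi by (auto simp: w_def)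
  qed
qed

end
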